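(* Let $(\mu_z^\varepsilon)$ be a time-analytic local random walk on $\mathcal G$. Then for every pair of distinct vertices $x,y$, \[ {}^{\mathcal O}\mathrm{Ric}(x,y)=\inf\Big\{\nabla_{yx}\mathcal L f\ :\ f:\mathcal K_{xy}\to\mathbb R,\ |f(u)-f(v)|\le\mathrm d(u,v)\ \forall u,v\in\mathcal K_{xy},\ \nabla_{xy}f=1\Big\}, \] where $\mathcal L f(z):=\sum_{w\neq z}\big(f(w)-f(z)\big)\,\frac{d}{d\varepsilon}\big|_{\varepsilon=0}\mu_z^\varepsilon(w)$.
   Context: $\mathcal G$ is a locally finite graph with vertex set $V$, distance $\mathrm d$ on $V$ with $(V,\mathrm d)$ complete. A random walk is a family of probability measures $\mu_z^\varepsilon$ ($z\in V$, $\varepsilon\in[0,1]$) with finite first moments, continuous in $\varepsilon$, $\mu_z^0=\delta_z$. It is local if for each $z$ there is a finite $\mathcal K_z\subset V$ with $\mathrm{supp}(\mu_z^\varepsilon)\subset\mathcal K_z$ for all $\varepsilon$ (so the sum defining $\mathcal Lf(z)$ runs over $w\in\mathcal K_z\setminus\{z\}$); $\mathcal K_{xy}:=\mathcal K_x\cup\mathcal K_y$. It is time-analytic if each $\varepsilon\mapsto\mu_x^\varepsilon(y)$ is analytic and extends analytically to $(-\delta_{xy},1+\delta_{xy})$ for some $\delta_{xy}>0$. ${}^{\mathcal O}\mathrm{Ric}_\varepsilon(x,y):=1-\mathcal W_1(\mu_x^\varepsilon,\mu_y^\varepsilon)/\mathrm d(x,y)$ and ${}^{\mathcal O}\mathrm{Ric}(x,y):=\lim_{\varepsilon\downarrow0}\varepsilon^{-1}{}^{\mathcal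 O}\mathrm{Ric}_\varepsilon(x,y)$. $\nabla_{xy}f:=(f(y)-f(x))/\mathrm d(x,y)$. *)

theory Defs
  imports "HOL-Analysis.Analysis"
begin

definition locally_finite_graph :: "'v set \<Rightarrow> ('v \<Rightarrow> 'v \<Rightarrow> bool) \<Rightarrow> bool" where
  "locally_finite_graph V E \<longleftrightarrow>
     (\<forall>u v. E u v \<longrightarrow> u \<in> V \<and> v \<in> V) \<and> (\<forall>u v. E u v \<longrightarrow> E v u) \<and>
     (\<forall>u\<in>V. finite {v. E u v})"

definition metric_on :: "'v set \<Rightarrow> ('v \<Rightarrow> 'v \<Rightarrow> real) \<Rightarrow> bool" where
  "metric_on V d \<longleftrightarrow>
     (\<forall>u\<in>V. \<forall>v\<in>V. d u v \<ge> 0 \<and> (d u v = 0 \<longleftrightarrow> u = v) \<and> d u v = d v u) \<and>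
     (\<forall>u\<in>V. \<forall>v\<in>V. \<forall>w\<in>V. d u w \<le> d u v + d v w)"

definition complete_metric_on :: "'v set \<Rightarrow> ('v \<Rightarrow> 'v \<Rightarrow> real) \<Rightarrow> bool" where
  "complete_metric_on V d \<longleftrightarrow>
     (\<forall>s. (\<forall>n. s n \<in> V) \<and> (\<forall>e>0. \<exists>N. \<forall>m\<ge>N. \<forall>n\<ge>N. d (s m) (s n) < e)
        \<longrightarrow> (\<exists>l\<in>V. (\<lambda>n. d (s n) l) \<longlonglongrightarrow> 0))"

definition real_analytic_on :: "(real \<Rightarrow> real) \<Rightarrow> real set \<Rightarrow> bool" where
  "real_analytic_on g S \<longleftrightarrow>
     (\<forall>t\<in>S. \<exists>r>0. \<exists>a::nat \<Rightarrow> real. \<forall>s. \<bar>s - t\<bar> < r \<longrightarrow> (\<lambda>n. a n * (s - t) ^ n) sums g s)"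

text \<open>A random walk is given by mass functions mu z eps w = mu_z^eps({w}).
  Only the values for eps in [0,1] matter.\<close>

definition local_random_walk ::
  "'v set \<Rightarrow> ('v \<Rightarrow> 'v \<Rightarrow> real) \<Rightarrow> ('v \<Rightarrow> real \<Rightarrow> 'v \<Rightarrow> real) \<Rightarrow> ('v \<Rightarrow> 'v set) \<Rightarrow> bool" where
  "local_random_walk V d \<mu> K \<longleftrightarrow>
     (\<forall>z\<in>V. \<forall>\<epsilon>\<in>{0..1}.
        (\<forall>w. \<mu> z \<epsilon> w \<ge> 0) \<and> ((\<mu> z \<epsilon>) has_sum 1) UNIV \<and>
        ((\<lambda>w. d z w * \<mu> z \<epsilon> w) summable_on V)) \<and>
     (\<forall>z\<in>V. \<forall>w. continuous_on {0..1} (\<lambda>\<epsilon>. \<mu> z \<epsilon> w)) \<and>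
     (\<forall>z\<in>V. \<forall>w. \<mu> z 0 w = (if w = z then 1 else 0)) \<and>
     (\<forall>z\<in>V. finite (K z) \<and> K z \<subseteq> V \<and>
        (\<forall>\<epsilon>\<in>{0..1}. {w. \<mu> z \<epsilon> w \<noteq> 0} \<subseteq> K z))"

definition time_analytic :: "'v set \<Rightarrow> ('v \<Rightarrow> real \<Rightarrow> 'v \<Rightarrow> real) \<Rightarrow> bool" where
  "time_analytic V \<mu> \<longleftrightarrow>
     (\<forall>x\<in>V. \<forall>y\<in>V. \<exists>\<delta>>0. \<exists>g. real_analytic_on g {-\<delta><..<1+\<delta>} \<and>
        (\<forall>\<epsilon>\<in>{0..1}. g \<epsilon> = \<mu> x \<epsilon> y))"

definition rate :: "('v \<Rightarrow> real \<Rightarrow> 'v \<Rightarrow> real) \<Rightarrow> 'v \<Rightarrow> 'v \<Rightarrow> real" where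
  "rate \<mu> z w = (THE D. ((\<lambda>\<epsilon>. \<mu> z \<epsilon> w) has_real_derivative D) (at 0 within {0..1}))"

definition gen :: "('v \<Rightarrow> real \<Rightarrow> 'v \<Rightarrow> real) \<Rightarrow> ('v \<Rightarrow> 'v set) \<Rightarrow> ('v \<Rightarrow> real) \<Rightarrow> 'v \<Rightarrow> real" where
  "gen \<mu> K f z = (\<Sum>w\<in>K z - {z}. (f w - f z) * rate \<mu> z w)"

definition grad :: "('v \<Rightarrow> 'v \<Rightarrow> real) \<Rightarrow> 'v \<Rightarrow> 'v \<Rightarrow> ('v \<Rightarrow> real) \<Rightarrow> real" where
  "grad d x y f = (f y - f x) / d x y"

definition coupling :: "('v \<Rightarrow> real) \<Rightarrow> ('v \<Rightarrow> real) \<Rightarrow> ('v \<times> 'v \<Rightarrow> real) \<Rightarrow> bool" where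
  "coupling p q \<pi> \<longleftrightarrow> (\<forall>u v. \<pi> (u, v) \<ge> 0) \<and>
     (\<forall>u. ((\<lambda>v. \<pi> (u, v)) has_sum p u) UNIV) \<and>
     (\<forall>v. ((\<lambda>u. \<pi> (u, v)) has_sum q v) UNIV)"

definition W1 :: "('v \<Rightarrow> 'v \<Rightarrow> real) \<Rightarrow> ('v \<Rightarrow> real) \<Rightarrow> ('v \<Rightarrow> real) \<Rightarrow> real" where
  "W1 d p q = Inf ((\<lambda>\<pi>. infsum (\<lambda>(u, v). d u v * \<pi> (u, v)) UNIV) ` {\<pi>. coupling p q \<pi>})"

definition ollivier_ric_eps :: "('v \<Rightarrow> 'v \<Rightarrow> real) \<Rightarrow> ('v \<Rightarrow> real \<Rightarrow> 'v \<Rightarrow> real) \<Rightarrow> real \<Rightarrow> 'v \<Rightarrow> 'v \<Rightarrow> real" where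
  "ollivier_ric_eps d \<mu> \<epsilon> x y = 1 - W1 d (\<mu> x \<epsilon>) (\<mu> y \<epsilon>) / d x y"

end

theory Submission
  imports Defs
begin

definition fm :: "(nat \<Rightarrow> real) \<Rightarrow> (nat \<Rightarrow> real) \<Rightarrow> nat \<Rightarrow> real" where
  "fm B a k = (if even k then B (k div 2)
     else B (fst (prod_decode (k div 2))) / a (fst (prod_decode (k div 2)))
        - B (snd (prod_decode (k div 2))) / a (snd (prod_decode (k div 2))))"

definition enc :: "nat \<times> nat \<Rightarrow> nat" where "enc ij = 2 * prod_encode ij + 1"

lemma fm_even[simp]: "fm B a (2 * i) = B i" by (simp add: fm_def)
lemma fm_enc[simp]: "fm B a (enc (i, j)) = B i / a i - B j / a j"
  by (simp add: fm_def enc_def)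
lemma fm_enc2: "fm B a (enc ij) = B (fst ij) / a (fst ij) - B (snd ij) / a (snd ij)"
  by (simp add: fm_def enc_def)
lemma inj_enc: "inj enc"
  by (auto simp: inj_def enc_def dest: inj_prod_encode[THEN injD])
lemma enc_odd: "enc ij \<noteq> 2 * i" unfolding enc_def by presburger

lemma fm_sum:
  fixes l' a B :: "nat \<Rightarrow> real"
  assumes fin: "finite I"
  defines "Z \<equiv> {i\<in>I. a i = 0}" and "P \<equiv> {i\<in>I. a i > 0}" and "N \<equiv> {i\<in>I. a i < 0}"
  defines "l \<equiv> \<lambda>i. if a i = 0 then l' (2 * i) else if a i > 0 then (\<Sum>j\<in>N. l' (enc (i, j))) / a i
            else (\<Sum>i'\<in>P. l' (enc (i', i))) / (- a i)"
  shows "(\<Sum>i\<in>I. l i * B i) = (\<Sum>k\<in>(\<lambda>i. 2*i) ` Z \<union> enc ` (P \<times> N). l' k * fm B a k)"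
proof -
  have fZ: "finite Z" and fP: "finite P" and fN: "finite N" using fin by (auto simp: Z_def P_def N_def)
  have I: "I = Z \<union> (P \<union> N)" by (auto simp: Z_def P_def N_def)
  have C: "(\<Sum>(i,j)\<in>P \<times> N. l' (enc (i, j)) * (B i / a i - B j / a j))
       = (\<Sum>i\<in>P. \<Sum>j\<in>N. l' (enc (i, j)) * (B i / a i)) - (\<Sum>i\<in>P. \<Sum>j\<in>N. l' (enc (i, j)) * (B j / a j))"
  proof -
    have "(\<Sum>(i,j)\<in>P \<times> N. l' (enc (i, j)) * (B i / a i - B j / a j))
       = (\<Sum>i\<in>P. \<Sum>j\<in>N. l' (enc (i, j)) * (B i / a i - B j / a j))"
      by (rule sum.cartesian_product[symmetric])
    also have "\<dots> = (\<Sum>i\<in>P. \<Sum>j\<in>N. l' (enc (i, j)) * (B i / a i)) - (\<Sum>i\<in>P. \<Sum>j\<in>N. l' (enc (i, j)) * (B j / a j))"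
      by (simp only: right_diff_distrib sum_subtractf)
    finally show ?thesis .
  qed
  have "(\<Sum>i\<in>I. l i * B i) = (\<Sum>i\<in>Z. l i * B i) + ((\<Sum>i\<in>P. l i * B i) + (\<Sum>i\<in>N. l i * B i))"
    unfolding I using fZ fP fN
    by (subst sum.union_disjoint, auto simp: Z_def P_def N_def intro: sum.union_disjoint)
  also have "(\<Sum>i\<in>Z. l i * B i) = (\<Sum>i\<in>Z. l' (2*i) * B i)"
    by (rule sum.cong) (auto simp: l_def Z_def)
  also have "(\<Sum>i\<in>P. l i * B i) = (\<Sum>i\<in>P. \<Sum>j\<in>N. l' (enc (i, j)) * (B i / a i))"
    by (rule sum.cong) (auto simp: l_def P_def sum_distrib_right sum_divide_distrib)
  also have "(\<Sum>i\<in>N. l i * B i) = (\<Sum>j\<in>N. - (\<Sum>i\<in>P. l' (enc (i, j)) * (B j / a j)))"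
  proof (rule sum.cong)
    fix j assume "j \<in> N"
    then have "a j < 0" by (auto simp: N_def)
    have e: "(\<Sum>i\<in>P. l' (enc (i, j)) * (B j / a j)) = (\<Sum>i\<in>P. l' (enc (i, j))) * (B j / a j)"
      by (rule sum_distrib_right[symmetric])
    show "l j * B j = - (\<Sum>i\<in>P. l' (enc (i, j)) * (B j / a j))"
      unfolding e using \<open>a j < 0\<close> by (simp add: l_def)
  qed simp
  also have "\<dots> = - (\<Sum>j\<in>N. \<Sum>i\<in>P. l' (enc (i, j)) * (B j / a j))"
    by (rule sum_negf)
  also have "(\<Sum>j\<in>N. \<Sum>i\<in>P. l' (enc (i, j)) * (B j / a j)) = (\<Sum>i\<in>P. \<Sum>j\<in>N. l' (enc (i, j)) * (B j / a j))"
    by (rule sum.swap)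
  finally have L: "(\<Sum>i\<in>I. l i * B i) = (\<Sum>i\<in>Z. l' (2*i) * B i) +
     (\<Sum>(i,j)\<in>P \<times> N. l' (enc (i, j)) * (B i / a i - B j / a j))"
    using C by simp
  have R: "(\<Sum>k\<in>(\<lambda>i. 2*i) ` Z \<union> enc ` (P \<times> N). l' k * fm B a k) =
     (\<Sum>k\<in>(\<lambda>i. 2*i) ` Z. l' k * fm B a k) + (\<Sum>k\<in>enc ` (P \<times> N). l' k * fm B a k)"
    using fZ fP fN enc_odd by (intro sum.union_disjoint) (auto, metis)
  also have "(\<Sum>k\<in>(\<lambda>i. 2*i) ` Z. l' k * fm B a k) = (\<Sum>i\<in>Z. l' (2*i) * B i)"
    by (subst sum.reindex) (auto simp: inj_on_def)
  also have "(\<Sum>k\<in>enc ` (P \<times> N). l' k * fm B a k) = (\<Sum>(i,j)\<in>P \<times> N. l' (enc (i, j)) * (B i / a i - B j / a j))"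
    by (simp add: sum.reindex[OF inj_on_subset[OF inj_enc subset_UNIV]] case_prod_beta' fm_enc2)
  finally show ?thesis using L by simp
qed

lemma farkas_nat:
  fixes A :: "nat \<Rightarrow> 'x \<Rightarrow> real" and c :: "nat \<Rightarrow> real"
  assumes "finite X" "finite I" "\<not> (\<exists>z. \<forall>i\<in>I. (\<Sum>v\<in>X. A i v * z v) \<le> c i)"
  shows "\<exists>l. (\<forall>i\<in>I. l i \<ge> 0) \<and> (\<forall>v\<in>X. (\<Sum>i\<in>I. l i * A i v) = 0) \<and> (\<Sum>i\<in>I. l i * c i) < 0"
  using assms
proof (induction X arbitrary: I A c rule: finite_induct)
  case empty
  then obtain i where i: "i \<in> I" "c i < 0" by (auto simp: not_le)
  have "(\<Sum>j\<in>I. (if j = i then 1 else 0) * c j) = (\<Sum>j\<in>I. if j = i then c j else 0)"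
    by (rule sum.cong) auto
  also have "\<dots> = c i" using i empty.prems by simp
  finally show ?case using i
    by (intro exI[of _ "\<lambda>j. if j = i then 1 else 0"]) auto
next
  case (insert s X)
  define a where "a = (\<lambda>i. A i s)"
  define Z where "Z = {i\<in>I. a i = 0}"
  define P where "P = {i\<in>I. a i > 0}"
  define N where "N = {i\<in>I. a i < 0}"
  define I' where "I' = (\<lambda>i. 2*i) ` Z \<union> enc ` (P \<times> N)"
  define A' where "A' = (\<lambda>k v. fm (\<lambda>i. A i v) a k)"
  define c' where "c' = fm c a"
  have fZ: "finite Z" and fP: "finite P" and fN: "finite N" using insert.prems(1) by (auto simp: Z_def P_def N_def)
  have fI': "finite I'" using fZ fP fN by (simp add: I'_def)
  have infeas: "\<not> (\<exists>z. \<forall>k\<in>I'. (\<Sum>v\<in>X. A' k v * z v) \<le> c' k)"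
  proof
    assume "\<exists>z. \<forall>k\<in>I'. (\<Sum>v\<in>X. A' k v * z v) \<le> c' k"
    then obtain z where z: "\<And>k. k \<in> I' \<Longrightarrow> (\<Sum>v\<in>X. A' k v * z v) \<le> c' k" by blast
    define Sm where "Sm = (\<lambda>i. \<Sum>v\<in>X. A i v * z v)"
    define L where "L = (\<lambda>i. (c i - Sm i) / a i)"
    define t where "t = (if N = {} then (if P = {} then 0 else Min (L ` P)) else Max (L ` N))"
    define z' where "z' = z(s := t)"
    have zZ: "Sm i \<le> c i" if "i \<in> Z" for i
      using z[of "2*i"] that by (simp add: I'_def A'_def c'_def Sm_def)
    have zPN: "L j \<le> L i" if "i \<in> P" "j \<in> N" for i j
    proof -
      have "(\<Sum>v\<in>X. A' (enc (i,j)) v * z v) \<le> c' (enc (i,j))"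
        using z[of "enc (i,j)"] that by (simp add: I'_def)
      also have "(\<Sum>v\<in>X. A' (enc (i,j)) v * z v) = Sm i / a i - Sm j / a j"
        by (simp add: A'_def Sm_def left_diff_distrib sum_subtractf sum_divide_distrib)
      finally have "Sm i / a i - Sm j / a j \<le> c i / a i - c j / a j" by (simp add: c'_def)
      then show ?thesis by (simp add: L_def diff_divide_distrib)
    qed
    have tP: "t \<le> L i" if "i \<in> P" for i
    proof (cases "N = {}")
      case True
      then show ?thesis using that fP by (auto simp: t_def)
    next
      case False
      then have "Max (L ` N) \<in> L ` N" using fN by (intro Max_in) auto
      then show ?thesis using False zPN that by (auto simp: t_def)
    qed
    have tN: "L j \<le> t" if "j \<in> N" for j
      using that fN by (auto simp: t_def)
    have "\<forall>i\<in>I. (\<Sum>v\<in>insert s X. A i v * z' v) \<le> c i"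
    proof
      fix i assume i: "i \<in> I"
      have e: "(\<Sum>v\<in>insert s X. A i v * z' v) = a i * t + Sm i"
      proof -
        have "(\<Sum>v\<in>X. A i v * z' v) = Sm i"
          unfolding Sm_def z'_def using insert.hyps(2) by (intro sum.cong) auto
        then show ?thesis using insert.hyps by (simp add: z'_def a_def)
      qed
      consider "a i = 0" | "a i > 0" | "a i < 0" by linarith
      then show "(\<Sum>v\<in>insert s X. A i v * z' v) \<le> c i"
      proof cases
        case 1 then show ?thesis using zZ[of i] i by (simp add: e Z_def)
      next
        case 2
        then have "t \<le> (c i - Sm i) / a i" using tP[of i] i by (simp add: P_def L_def)
        then have "t * a i \<le> c i - Sm i" using 2 by (simp add: pos_le_divide_eq)
        then show ?thesis unfolding e by (simp add: algebra_simps)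
      next
        case 3
        then have "(c i - Sm i) / a i \<le> t" using tN[of i] i by (simp add: N_def L_def)
        then have "t * a i \<le> c i - Sm i" using 3 by (simp add: neg_divide_le_eq)
        then show ?thesis unfolding e by (simp add: algebra_simps)
      qed
    qed
    then show False using insert.prems(2) by blast
  qed
  obtain l' where l': "\<forall>k\<in>I'. l' k \<ge> 0" "\<forall>v\<in>X. (\<Sum>k\<in>I'. l' k * A' k v) = 0" "(\<Sum>k\<in>I'. l' k * c' k) < 0"
    using insert.IH[OF fI' infeas] by blast
  define l where "l = (\<lambda>i. if a i = 0 then l' (2 * i) else if a i > 0 then (\<Sum>j\<in>N. l' (enc (i, j))) / a i
            else (\<Sum>i'\<in>P. l' (enc (i', i))) / (- a i))"
  have key: "(\<Sum>i\<in>I. l i * B i) = (\<Sum>k\<in>I'. l' k * fm B a k)" for B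
    unfolding l_def I'_def Z_def P_def N_def by (rule fm_sum[OF insert.prems(1)])
  show ?case
  proof (intro exI[of _ l] conjI ballI)
    fix i assume "i \<in> I"
    have "l' (2*i) \<ge> 0" if "a i = 0" using l'(1) that \<open>i \<in> I\<close> by (auto simp: I'_def Z_def)
    moreover have "(\<Sum>j\<in>N. l' (enc (i, j))) \<ge> 0" if "a i > 0"
      using l'(1) that \<open>i \<in> I\<close> by (intro sum_nonneg) (auto simp: I'_def P_def)
    moreover have "(\<Sum>i'\<in>P. l' (enc (i', i))) \<ge> 0" if "a i < 0"
      using l'(1) that \<open>i \<in> I\<close> by (intro sum_nonneg) (auto simp: I'_def N_def)
    ultimately show "l i \<ge> 0" by (auto simp: l_def divide_nonneg_neg)
  next
    fix v assume v: "v \<in> insert s X"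
    show "(\<Sum>i\<in>I. l i * A i v) = 0"
    proof (cases "v = s")
      case True
      have "(\<Sum>i\<in>I. l i * A i v) = (\<Sum>k\<in>I'. l' k * fm a a k)"
        using key[of a] True by (simp add: a_def)
      also have "\<dots> = 0"
      proof (rule sum.neutral, rule ballI)
        fix k assume "k \<in> I'"
        then show "l' k * fm a a k = 0" by (auto simp: I'_def Z_def P_def N_def)
      qed
      finally show ?thesis .
    next
      case False
      then have "v \<in> X" using v by simp
      then show ?thesis using key[of "\<lambda>i. A i v"] l'(2) by (simp add: A'_def)
    qed
  next
    show "(\<Sum>i\<in>I. l i * c i) < 0" using key[of c] l'(3) by (simp add: c'_def)
  qed
qed

lemma farkas:
  fixes A :: "'i \<Rightarrow> 'x \<Rightarrow> real" and c :: "'i \<Rightarrow> real"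
  assumes "finite X" "finite I" "\<not> (\<exists>z. \<forall>i\<in>I. (\<Sum>v\<in>X. A i v * z v) \<le> c i)"
  shows "\<exists>l. (\<forall>i\<in>I. l i \<ge> 0) \<and> (\<forall>v\<in>X. (\<Sum>i\<in>I. l i * A i v) = 0) \<and> (\<Sum>i\<in>I. l i * c i) < 0"
proof -
  obtain h where h: "bij_betw h {0..<card I} I" using ex_bij_betw_nat_finite[OF assms(2)] by blast
  have "\<not> (\<exists>z. \<forall>n\<in>{0..<card I}. (\<Sum>v\<in>X. A (h n) v * z v) \<le> c (h n))"
  proof
    assume "\<exists>z. \<forall>n\<in>{0..<card I}. (\<Sum>v\<in>X. A (h n) v * z v) \<le> c (h n)"
    then obtain z where z: "\<forall>n\<in>{0..<card I}. (\<Sum>v\<in>X. A (h n) v * z v) \<le> c (h n)" by blast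
    have "\<forall>i\<in>I. (\<Sum>v\<in>X. A i v * z v) \<le> c i"
    proof
      fix i assume "i \<in> I"
      then obtain n where "n \<in> {0..<card I}" "i = h n" using h unfolding bij_betw_def by blast
      then show "(\<Sum>v\<in>X. A i v * z v) \<le> c i" using z by simp
    qed
    then show False using assms(3) by blast
  qed
  from farkas_nat[OF assms(1) _ this] obtain l0 where
    l0: "\<forall>n\<in>{0..<card I}. l0 n \<ge> 0" "\<forall>v\<in>X. (\<Sum>n\<in>{0..<card I}. l0 n * A (h n) v) = 0"
        "(\<Sum>n\<in>{0..<card I}. l0 n * c (h n)) < 0" by auto
  define g where "g = inv_into {0..<card I} h"
  have gh: "g (h n) = n" if "n \<in> {0..<card I}" for n
    using h that by (simp add: g_def bij_betw_def inv_into_f_f)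
  have S: "(\<Sum>i\<in>I. l0 (g i) * F i) = (\<Sum>n\<in>{0..<card I}. l0 n * F (h n))" for F :: "'i \<Rightarrow> real"
    using sum.reindex_bij_betw[OF h, of "\<lambda>i. l0 (g i) * F i"] gh by (auto intro: sum.cong)
  show ?thesis
  proof (intro exI[of _ "\<lambda>i. l0 (g i)"] conjI ballI)
    fix i assume "i \<in> I"
    then have "g i \<in> {0..<card I}" using h unfolding g_def bij_betw_def by (metis inv_into_into)
    then show "l0 (g i) \<ge> 0" using l0(1) by blast
  next
    fix v assume "v \<in> X" then show "(\<Sum>i\<in>I. l0 (g i) * A i v) = 0" using S[of "\<lambda>i. A i v"] l0(2) by simp
  next
    show "(\<Sum>i\<in>I. l0 (g i) * c i) < 0" using S[of c] l0(3) by simp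
  qed
qed


datatype 'a kidx = KPos 'a 'a | KRU 'a | KRL 'a | KCU 'a | KCL 'a | KCost

fun kA :: "('a \<Rightarrow> 'a \<Rightarrow> real) \<Rightarrow> 'a kidx \<Rightarrow> 'a \<times> 'a \<Rightarrow> real" where
  "kA d (KPos u v) w = (if w = (u, v) then -1 else 0)"
| "kA d (KRU u) w = (if fst w = u then 1 else 0)"
| "kA d (KRL u) w = (if fst w = u then -1 else 0)"
| "kA d (KCU v) w = (if snd w = v then 1 else 0)"
| "kA d (KCL v) w = (if snd w = v then -1 else 0)"
| "kA d KCost w = d (fst w) (snd w)"

fun kc :: "real \<Rightarrow> ('a \<Rightarrow> real) \<Rightarrow> ('a \<Rightarrow> real) \<Rightarrow> 'a kidx \<Rightarrow> real" where
  "kc B p q (KPos u v) = 0"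
| "kc B p q (KRU u) = p u"
| "kc B p q (KRL u) = - p u"
| "kc B p q (KCU v) = q v"
| "kc B p q (KCL v) = - q v"
| "kc B p q KCost = B"

definition KI :: "'a set \<Rightarrow> 'a kidx set" where
  "KI S = (\<lambda>(u,v). KPos u v) ` (S \<times> S) \<union> (KRU ` S \<union> (KRL ` S \<union> (KCU ` S \<union> (KCL ` S \<union> {KCost}))))"

lemma KI_finite: "finite S \<Longrightarrow> finite (KI S)"
  by (simp add: KI_def)

lemma KI_sum:
  fixes g :: "'a kidx \<Rightarrow> real"
  assumes "finite S"
  shows "(\<Sum>i\<in>KI S. g i) = (\<Sum>(u,v)\<in>S \<times> S. g (KPos u v)) + ((\<Sum>u\<in>S. g (KRU u)) + ((\<Sum>u\<in>S. g (KRL u))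
     + ((\<Sum>u\<in>S. g (KCU u)) + ((\<Sum>u\<in>S. g (KCL u)) + g KCost))))"
proof -
  have i1: "inj_on (\<lambda>(u,v). KPos u v) (S \<times> S)" by (auto simp: inj_on_def)
  have r1: "(\<Sum>i\<in>(\<lambda>(u,v). KPos u v) ` (S \<times> S). g i) = (\<Sum>(u,v)\<in>S \<times> S. g (KPos u v))"
    by (subst sum.reindex[OF i1]) (simp add: case_prod_beta')
  have r: "(\<Sum>i\<in>C ` S. g i) = (\<Sum>u\<in>S. g (C u))" if "inj C" for C :: "'a \<Rightarrow> 'a kidx"
    using that by (simp add: sum.reindex inj_on_subset)
  have e5: "sum g (KCL ` S \<union> {KCost}) = (\<Sum>u\<in>S. g (KCL u)) + g KCost"
    using assms by (subst sum.union_disjoint) (auto simp: r inj_def)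
  have e4: "sum g (KCU ` S \<union> (KCL ` S \<union> {KCost})) = (\<Sum>u\<in>S. g (KCU u)) + sum g (KCL ` S \<union> {KCost})"
    using assms by (subst sum.union_disjoint) (auto simp: r inj_def)
  have e3: "sum g (KRL ` S \<union> (KCU ` S \<union> (KCL ` S \<union> {KCost}))) = (\<Sum>u\<in>S. g (KRL u)) + sum g (KCU ` S \<union> (KCL ` S \<union> {KCost}))"
    using assms by (subst sum.union_disjoint) (auto simp: r inj_def)
  have e2: "sum g (KRU ` S \<union> (KRL ` S \<union> (KCU ` S \<union> (KCL ` S \<union> {KCost})))) = (\<Sum>u\<in>S. g (KRU u)) + sum g (KRL ` S \<union> (KCU ` S \<union> (KCL ` S \<union> {KCost})))"
    using assms by (subst sum.union_disjoint) (auto simp: r inj_def)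
  have e1: "sum g ((\<lambda>(u,v). KPos u v) ` (S \<times> S) \<union> (KRU ` S \<union> (KRL ` S \<union> (KCU ` S \<union> (KCL ` S \<union> {KCost})))))
     = sum g ((\<lambda>(u,v). KPos u v) ` (S \<times> S)) + sum g (KRU ` S \<union> (KRL ` S \<union> (KCU ` S \<union> (KCL ` S \<union> {KCost}))))"
    using assms by (intro sum.union_disjoint) auto
  show ?thesis unfolding KI_def e1 e2 e3 e4 e5 r1 ..
qed

lemma ifz: "(if P then c else 0) * (t::real) = (if P then c * t else 0)" by simp

lemma sum_fst_delta:
  fixes z :: "'a \<times> 'a \<Rightarrow> real"
  assumes "finite S" "u \<in> S"
  shows "(\<Sum>w\<in>S \<times> S. (if fst w = u then c else 0) * z w) = c * (\<Sum>v\<in>S. z (u, v))"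
proof -
  have "(\<Sum>w\<in>S \<times> S. (if fst w = u then c else 0) * z w) = (\<Sum>u'\<in>S. \<Sum>v\<in>S. (if u' = u then c else 0) * z (u', v))"
    by (subst sum.cartesian_product) (simp add: case_prod_beta')
  also have "\<dots> = (\<Sum>u'\<in>S. if u' = u then c * (\<Sum>v\<in>S. z (u', v)) else 0)"
    by (rule sum.cong) (auto simp: sum_distrib_left)
  also have "\<dots> = c * (\<Sum>v\<in>S. z (u, v))" using assms by simp
  finally show ?thesis .
qed

lemma sum_snd_delta:
  fixes z :: "'a \<times> 'a \<Rightarrow> real"
  assumes "finite S" "v \<in> S"
  shows "(\<Sum>w\<in>S \<times> S. (if snd w = v then c else 0) * z w) = c * (\<Sum>u\<in>S. z (u, v))"
proof -
  have "(\<Sum>w\<in>S \<times> S. (if snd w = v then c else 0) * z w) = (\<Sum>u\<in>S. \<Sum>v'\<in>S. (if v' = v then c else 0) * z (u, v'))"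
    by (subst sum.cartesian_product) (simp add: case_prod_beta')
  also have "\<dots> = (\<Sum>u\<in>S. c * z (u, v))"
    by (rule sum.cong) (use assms in \<open>simp_all add: ifz\<close>)
  also have "\<dots> = c * (\<Sum>u\<in>S. z (u, v))" by (simp add: sum_distrib_left)
  finally show ?thesis .
qed

lemma kA_sum:
  fixes l :: "'a kidx \<Rightarrow> real"
  assumes "finite S" "u \<in> S" "v \<in> S"
  shows "(\<Sum>i\<in>KI S. l i * kA d i (u, v)) = - l (KPos u v) + l (KRU u) - l (KRL u) + l (KCU v) - l (KCL v) + l KCost * d u v"
proof -
  have 1: "(\<Sum>(u',v')\<in>S \<times> S. l (KPos u' v') * kA d (KPos u' v') (u, v)) = - l (KPos u v)"
  proof -
    have "(\<Sum>(u',v')\<in>S \<times> S. l (KPos u' v') * kA d (KPos u' v') (u, v)) = (\<Sum>w\<in>S \<times> S. if w = (u, v) then - l (KPos u v) else 0)"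
      by (rule sum.cong) (auto split: if_splits)
    also have "\<dots> = - l (KPos u v)" using assms by simp
    finally show ?thesis .
  qed
  have 2: "(\<Sum>u'\<in>S. l (C u') * (if w = u' then e else 0)) = l (C w) * e"
    if "w \<in> S" for C :: "'a \<Rightarrow> 'a kidx" and e :: real and w
  proof -
    have "(\<Sum>u'\<in>S. l (C u') * (if w = u' then e else 0)) = (\<Sum>u'\<in>S. if u' = w then l (C w) * e else 0)"
      by (rule sum.cong) auto
    also have "\<dots> = l (C w) * e" using assms(1) that(1) by simp
    finally show ?thesis .
  qed
  show ?thesis
    unfolding KI_sum[OF assms(1)] 1
    by (simp add: 2[OF assms(2)] 2[OF assms(3)])
qed

lemma kc_sum:
  fixes l :: "'a kidx \<Rightarrow> real"
  assumes "finite S"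
  shows "(\<Sum>i\<in>KI S. l i * kc B p q i) = (\<Sum>u\<in>S. (l (KRU u) - l (KRL u)) * p u) + (\<Sum>u\<in>S. (l (KCU u) - l (KCL u)) * q u) + l KCost * B"
  using assms by (simp add: KI_sum left_diff_distrib sum_subtractf sum_negf)

lemma KR_dual:
  fixes d :: "'a \<Rightarrow> 'a \<Rightarrow> real" and p q :: "'a \<Rightarrow> real"
  assumes fin: "finite S" and ne: "S \<noteq> {}"
    and d0: "\<And>u. u \<in> S \<Longrightarrow> d u u = 0"
    and dsym: "\<And>u v. u \<in> S \<Longrightarrow> v \<in> S \<Longrightarrow> d u v = d v u"
    and dtri: "\<And>u v w. u \<in> S \<Longrightarrow> v \<in> S \<Longrightarrow> w \<in> S \<Longrightarrow> d u w \<le> d u v + d v w"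
    and p0: "\<And>u. u \<in> S \<Longrightarrow> p u \<ge> 0" and p1: "sum p S = 1"
    and q0: "\<And>u. u \<in> S \<Longrightarrow> q u \<ge> 0" and q1: "sum q S = 1"
    and bound: "\<And>h. (\<forall>u\<in>S. \<forall>v\<in>S. \<bar>h u - h v\<bar> \<le> d u v) \<Longrightarrow> (\<Sum>u\<in>S. h u * (p u - q u)) \<le> B"
  shows "\<exists>\<pi>. (\<forall>u\<in>S. \<forall>v\<in>S. \<pi> (u, v) \<ge> 0) \<and> (\<forall>u\<in>S. (\<Sum>v\<in>S. \<pi> (u, v)) = p u)
     \<and> (\<forall>v\<in>S. (\<Sum>u\<in>S. \<pi> (u, v)) = q v) \<and> (\<Sum>w\<in>S \<times> S. d (fst w) (snd w) * \<pi> w) \<le> B"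
proof (rule ccontr)
  assume nex: "\<not> ?thesis"
  have infeas: "\<not> (\<exists>z. \<forall>i\<in>KI S. (\<Sum>w\<in>S \<times> S. kA d i w * z w) \<le> kc B p q i)"
  proof
    assume "\<exists>z. \<forall>i\<in>KI S. (\<Sum>w\<in>S \<times> S. kA d i w * z w) \<le> kc B p q i"
    then obtain z where z: "\<And>i. i \<in> KI S \<Longrightarrow> (\<Sum>w\<in>S \<times> S. kA d i w * z w) \<le> kc B p q i" by blast
    have "z (u, v) \<ge> 0" if "u \<in> S" "v \<in> S" for u v
    proof -
      have "(\<Sum>w\<in>S \<times> S. kA d (KPos u v) w * z w) = (\<Sum>w\<in>S \<times> S. if w = (u, v) then - z (u,v) else 0)"
        by (rule sum.cong) auto
      also have "\<dots> = - z (u, v)" using that fin by simp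
      moreover have "KPos u v \<in> KI S" using that by (force simp: KI_def)
      ultimately show ?thesis using z[of "KPos u v"] by simp
    qed
    moreover have "(\<Sum>v\<in>S. z (u, v)) = p u" if "u \<in> S" for u
      using z[of "KRU u"] z[of "KRL u"] that fin by (simp add: KI_def sum_fst_delta)
    moreover have "(\<Sum>u\<in>S. z (u, v)) = q v" if "v \<in> S" for v
      using z[of "KCU v"] z[of "KCL v"] that fin by (simp add: KI_def sum_snd_delta)
    moreover have "(\<Sum>w\<in>S \<times> S. d (fst w) (snd w) * z w) \<le> B"
      using z[of KCost] by (simp add: KI_def)
    ultimately show False using nex by blast
  qed
  obtain l where l0: "\<forall>i\<in>KI S. l i \<ge> 0" and lA: "\<forall>w\<in>S \<times> S. (\<Sum>i\<in>KI S. l i * kA d i w) = 0"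
    and lc: "(\<Sum>i\<in>KI S. l i * kc B p q i) < 0"
    using farkas[OF finite_cartesian_product[OF fin fin] KI_finite[OF fin] infeas] by blast
  define F where "F = (\<lambda>u. l (KRL u) - l (KRU u))"
  define G where "G = (\<lambda>u. l (KCL u) - l (KCU u))"
  define c where "c = l KCost"
  have c0: "c \<ge> 0" using l0 by (simp add: c_def KI_def)
  have FG: "F u + G v \<le> c * d u v" if "u \<in> S" "v \<in> S" for u v
  proof -
    have "l (KPos u v) \<ge> 0" using l0 that by (auto simp: KI_def)
    moreover have "(\<Sum>i\<in>KI S. l i * kA d i (u, v)) = 0" using lA that by auto
    ultimately show ?thesis using kA_sum[OF fin that, of l d] by (simp add: F_def G_def c_def)
  qed
  have gt: "(\<Sum>u\<in>S. F u * p u) + (\<Sum>u\<in>S. G u * q u) > c * B"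
    using lc kc_sum[OF fin, of l B p q]
    by (simp add: F_def G_def c_def left_diff_distrib sum_subtractf)
  show False
  proof (cases "c = 0")
    case True
    have "(\<Sum>u\<in>S. F u * p u) + (\<Sum>u\<in>S. G u * q u) = (\<Sum>u\<in>S. \<Sum>v\<in>S. p u * q v * (F u + G v))"
    proof -
      have "(\<Sum>u\<in>S. F u * p u) = (\<Sum>u\<in>S. \<Sum>v\<in>S. p u * q v * F u)"
        by (simp add: sum_distrib_left[symmetric] sum_distrib_right[symmetric] q1 mult.commute mult.left_commute)
      moreover have "(\<Sum>u\<in>S. G u * q u) = (\<Sum>u\<in>S. \<Sum>v\<in>S. p u * q v * G v)"
        by (subst sum.swap) (simp add: sum_distrib_left[symmetric] sum_distrib_right[symmetric] p1 mult.commute mult.left_commute)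
      ultimately show ?thesis by (simp add: distrib_left sum.distrib)
    qed
    also have "\<dots> \<le> 0"
      using FG True p0 q0 by (intro sum_nonpos mult_nonneg_nonpos) auto
    finally show False using gt True by simp
  next
    case False
    then have cpos: "c > 0" using c0 by simp
    define G' where "G' = (\<lambda>v. G v / c)"
    define h where "h = (\<lambda>u. Min ((\<lambda>v. d u v - G' v) ` S))"
    have hle: "h u \<le> d u v - G' v" if "v \<in> S" for u v
      using fin that by (simp add: h_def)
    have hin: "\<exists>v\<in>S. h u = d u v - G' v" for u
    proof -
      have "h u \<in> (\<lambda>v. d u v - G' v) ` S" unfolding h_def using fin ne by (intro Min_in) auto
      then show ?thesis by auto
    qed
    have hF: "F u / c \<le> h u" if "u \<in> S" for u
    proof -
      obtain v where v: "v \<in> S" "h u = d u v - G' v" using hin by blast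
      have "F u + G v \<le> c * d u v" using FG that v by auto
      then have "F u / c + G v / c \<le> d u v" using cpos by (simp add: field_simps)
      then show ?thesis using v by (simp add: G'_def)
    qed
    have hG: "G' v \<le> - h v" if "v \<in> S" for v
      using hle[OF that, of v] d0[OF that] by simp
    have hlip: "\<forall>u\<in>S. \<forall>v\<in>S. \<bar>h u - h v\<bar> \<le> d u v"
    proof (intro ballI)
      have one: "h u \<le> d u v + h v" if "u \<in> S" "v \<in> S" for u v
      proof -
        obtain w where w: "w \<in> S" "h v = d v w - G' w" using hin by blast
        have "h u \<le> d u w - G' w" using hle w by blast
        also have "\<dots> \<le> d u v + d v w - G' w" using dtri[OF that w(1)] by simp
        finally show ?thesis using w by simp
      qed
      fix u v assume "u \<in> S" "v \<in> S"
      then show "\<bar>h u - h v\<bar> \<le> d u v" using one[of u v] one[of v u] dsym[of u v] by auto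
    qed
    have "(\<Sum>u\<in>S. h u * (p u - q u)) = (\<Sum>u\<in>S. h u * p u) + (\<Sum>u\<in>S. (- h u) * q u)"
      by (simp add: right_diff_distrib sum_subtractf sum_negf)
    also have "\<dots> \<ge> (\<Sum>u\<in>S. (F u / c) * p u) + (\<Sum>u\<in>S. G' u * q u)"
      using hF hG p0 q0 by (intro add_mono sum_mono mult_right_mono) auto
    finally have "(\<Sum>u\<in>S. h u * (p u - q u)) \<ge> ((\<Sum>u\<in>S. F u * p u) + (\<Sum>u\<in>S. G u * q u)) / c"
      by (simp add: G'_def sum_divide_distrib add_divide_distrib)
    moreover have "((\<Sum>u\<in>S. F u * p u) + (\<Sum>u\<in>S. G u * q u)) / c > B"
      using gt cpos by (simp add: field_simps)
    ultimately show False using bound[OF hlip] by linarith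
  qed
qed


lemma term_le_has_sum:
  fixes f :: "'a \<Rightarrow> real"
  assumes "(f has_sum s) UNIV" "\<And>w. f w \<ge> 0"
  shows "f w0 \<le> s"
proof -
  have h: "(f has_sum f w0) {w0}" using has_sum_finite[of "{w0}" f] by simp
  show ?thesis using has_sum_mono_neutral[OF h assms(1)] assms(2) by auto
qed

lemma hs_support:
  fixes f :: "'a \<Rightarrow> real"
  assumes "(f has_sum s) UNIV" "finite S" "\<And>w. w \<notin> S \<Longrightarrow> f w = 0"
  shows "sum f S = s"
proof -
  have "(f has_sum s) S" using assms(1) has_sum_cong_neutral[of S UNIV f f s] assms(3) by auto
  then show ?thesis using has_sum_finite[OF assms(2), of f] has_sum_unique by blast
qed

lemma hs_of_support:
  fixes f :: "'a \<Rightarrow> real"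
  assumes "finite S" "\<And>w. w \<notin> S \<Longrightarrow> f w = 0" "sum f S = s"
  shows "(f has_sum s) UNIV"
proof -
  have "(f has_sum s) S" using has_sum_finite[OF assms(1), of f] assms(3) by simp
  then show ?thesis using has_sum_cong_neutral[of S UNIV f f s] assms(2) by auto
qed

definition WA :: "'a set \<Rightarrow> ('a \<Rightarrow> real) \<Rightarrow> ('a \<Rightarrow> real) \<Rightarrow> bool" where
  "WA S p q \<longleftrightarrow> finite S \<and> (\<forall>w. p w \<ge> 0) \<and> (\<forall>w. q w \<ge> 0) \<and> (\<forall>w. w \<notin> S \<longrightarrow> p w = 0)
     \<and> (\<forall>w. w \<notin> S \<longrightarrow> q w = 0) \<and> sum p S = 1 \<and> sum q S = 1"

lemma coupling_props:
  assumes WA: "WA S p q" and c: "coupling p q \<pi>"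
  shows "infsum (\<lambda>(u, v). d u v * \<pi> (u, v)) UNIV = (\<Sum>w\<in>S \<times> S. d (fst w) (snd w) * \<pi> w)"
    and "\<And>u. u \<in> S \<Longrightarrow> (\<Sum>v\<in>S. \<pi> (u, v)) = p u"
    and "\<And>v. v \<in> S \<Longrightarrow> (\<Sum>u\<in>S. \<pi> (u, v)) = q v"
    and "\<And>w. \<pi> w \<ge> 0"
proof -
  have fin: "finite S" and pz: "\<And>w. w \<notin> S \<Longrightarrow> p w = 0" and qz: "\<And>w. w \<notin> S \<Longrightarrow> q w = 0"
    using WA by (auto simp: WA_def)
  have nn: "\<And>u v. \<pi> (u, v) \<ge> 0" and row: "\<And>u. ((\<lambda>v. \<pi> (u, v)) has_sum p u) UNIV"
    and col: "\<And>v. ((\<lambda>u. \<pi> (u, v)) has_sum q v) UNIV"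
    using c by (auto simp: coupling_def)
  have z: "\<pi> (u, v) = 0" if "(u, v) \<notin> S \<times> S" for u v
  proof (cases "u \<in> S")
    case True
    then have "v \<notin> S" using that by auto
    have "\<pi> (u, v) \<le> q v" using term_le_has_sum[OF col] nn by blast
    then show ?thesis using nn[of u v] qz[OF \<open>v \<notin> S\<close>] by simp
  next
    case False
    have "\<pi> (u, v) \<le> p u" using term_le_has_sum[OF row] nn by blast
    then show ?thesis using nn[of u v] pz[OF False] by simp
  qed
  show "infsum (\<lambda>(u, v). d u v * \<pi> (u, v)) UNIV = (\<Sum>w\<in>S \<times> S. d (fst w) (snd w) * \<pi> w)"
  proof -
    have "infsum (\<lambda>(u, v). d u v * \<pi> (u, v)) UNIV = infsum (\<lambda>(u, v). d u v * \<pi> (u, v)) (S \<times> S)"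
    proof (rule infsum_cong_neutral)
      fix w assume "w \<in> UNIV - S \<times> S"
      then show "(case w of (u, v) \<Rightarrow> d u v * \<pi> (u, v)) = 0" using z by (cases w) auto
    qed auto
    also have "\<dots> = (\<Sum>w\<in>S \<times> S. d (fst w) (snd w) * \<pi> w)"
      using fin by (simp add: case_prod_beta')
    finally show ?thesis .
  qed
  show "(\<Sum>v\<in>S. \<pi> (u, v)) = p u" if "u \<in> S" for u
    using hs_support[OF row fin] z that by auto
  show "(\<Sum>u\<in>S. \<pi> (u, v)) = q v" if "v \<in> S" for v
    using hs_support[OF col fin] z that by auto
  show "\<pi> w \<ge> 0" for w using nn[of "fst w" "snd w"] by simp
qed

lemma weak_dual:
  assumes WA: "WA S p q" and c: "coupling p q \<pi>"
    and lip: "\<forall>u\<in>S. \<forall>v\<in>S. \<bar>h u - h v\<bar> \<le> d u v"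
  shows "(\<Sum>u\<in>S. h u * (p u - q u)) \<le> infsum (\<lambda>(u, v). d u v * \<pi> (u, v)) UNIV"
proof -
  note cp = coupling_props[OF WA c]
  have fin: "finite S" using WA by (simp add: WA_def)
  have "(\<Sum>u\<in>S. h u * (p u - q u)) = (\<Sum>u\<in>S. h u * p u) - (\<Sum>v\<in>S. h v * q v)"
    by (simp add: right_diff_distrib sum_subtractf)
  also have "(\<Sum>u\<in>S. h u * p u) = (\<Sum>u\<in>S. \<Sum>v\<in>S. h u * \<pi> (u, v))"
    by (rule sum.cong) (simp_all add: cp(2) sum_distrib_left[symmetric])
  also have "(\<Sum>v\<in>S. h v * q v) = (\<Sum>u\<in>S. \<Sum>v\<in>S. h v * \<pi> (u, v))"
    by (subst sum.swap, rule sum.cong) (simp_all add: cp(3) sum_distrib_left[symmetric])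
  also have "(\<Sum>u\<in>S. \<Sum>v\<in>S. h u * \<pi> (u, v)) - (\<Sum>u\<in>S. \<Sum>v\<in>S. h v * \<pi> (u, v))
      = (\<Sum>w\<in>S \<times> S. (h (fst w) - h (snd w)) * \<pi> w)"
  proof -
    have cp2: "(\<Sum>w\<in>S \<times> S. g w) = (\<Sum>u\<in>S. \<Sum>v\<in>S. g (u, v))" for g :: "_ \<Rightarrow> real"
      by (subst sum.cartesian_product) (simp add: case_prod_beta')
    show ?thesis
      by (simp only: cp2 left_diff_distrib sum_subtractf fst_conv snd_conv)
  qed
  also have "\<dots> \<le> (\<Sum>w\<in>S \<times> S. d (fst w) (snd w) * \<pi> w)"
  proof (rule sum_mono)
    fix w assume "w \<in> S \<times> S"
    then have "h (fst w) - h (snd w) \<le> d (fst w) (snd w)" using lip by force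
    then show "(h (fst w) - h (snd w)) * \<pi> w \<le> d (fst w) (snd w) * \<pi> w"
      using cp(4)[of w] by (rule mult_right_mono)
  qed
  finally show ?thesis using cp(1) by simp
qed

lemma product_coupling:
  assumes WA: "WA S p q"
  shows "coupling p q (\<lambda>(u, v). p u * q v)"
proof -
  have fin: "finite S" using WA by (simp add: WA_def)
  have ph: "(p has_sum 1) UNIV" and qh: "(q has_sum 1) UNIV"
    using WA by (auto simp: WA_def intro!: hs_of_support[OF fin])
  have r: "((\<lambda>v. p u * q v) has_sum p u) UNIV" for u using has_sum_cmult_right[OF qh, of "p u"] by simp
  have c: "((\<lambda>u. p u * q v) has_sum q v) UNIV" for v using has_sum_cmult_right[OF ph, of "q v"] by (simp add: mult.commute)
  show ?thesis unfolding coupling_def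
    using WA r c by (auto simp: WA_def)
qed

lemma W1_ge:
  assumes WA: "WA S p q" and lip: "\<forall>u\<in>S. \<forall>v\<in>S. \<bar>h u - h v\<bar> \<le> d u v"
  shows "(\<Sum>u\<in>S. h u * (p u - q u)) \<le> W1 d p q"
  unfolding W1_def
proof (rule cInf_greatest)
  show "(\<lambda>\<pi>. infsum (\<lambda>(u, v). d u v * \<pi> (u, v)) UNIV) ` {\<pi>. coupling p q \<pi>} \<noteq> {}"
    using product_coupling[OF WA] by blast
  fix x assume "x \<in> (\<lambda>\<pi>. infsum (\<lambda>(u, v). d u v * \<pi> (u, v)) UNIV) ` {\<pi>. coupling p q \<pi>}"
  then obtain \<pi> where "coupling p q \<pi>" "x = infsum (\<lambda>(u, v). d u v * \<pi> (u, v)) UNIV" by blast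
  then show "(\<Sum>u\<in>S. h u * (p u - q u)) \<le> x" using weak_dual[OF WA _ lip] by simp
qed

lemma W1_le:
  assumes WA: "WA S p q" and ne: "S \<noteq> {}"
    and d0: "\<And>u. u \<in> S \<Longrightarrow> d u u = 0"
    and dsym: "\<And>u v. u \<in> S \<Longrightarrow> v \<in> S \<Longrightarrow> d u v = d v u"
    and dtri: "\<And>u v w. u \<in> S \<Longrightarrow> v \<in> S \<Longrightarrow> w \<in> S \<Longrightarrow> d u w \<le> d u v + d v w"
    and dnn: "\<And>u v. u \<in> S \<Longrightarrow> v \<in> S \<Longrightarrow> d u v \<ge> 0"
    and bound: "\<And>h. (\<forall>u\<in>S. \<forall>v\<in>S. \<bar>h u - h v\<bar> \<le> d u v) \<Longrightarrow> (\<Sum>u\<in>S. h u * (p u - q u)) \<le> B"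
  shows "W1 d p q \<le> B"
proof -
  have fin: "finite S" and p0: "\<And>w. p w \<ge> 0" and q0: "\<And>w. q w \<ge> 0"
    and pz: "\<And>w. w \<notin> S \<Longrightarrow> p w = 0" and qz: "\<And>w. w \<notin> S \<Longrightarrow> q w = 0"
    and p1: "sum p S = 1" and q1: "sum q S = 1"
    using WA by (auto simp: WA_def)
  obtain \<pi>0 where nn: "\<forall>u\<in>S. \<forall>v\<in>S. \<pi>0 (u, v) \<ge> 0" and rw: "\<forall>u\<in>S. (\<Sum>v\<in>S. \<pi>0 (u, v)) = p u"
    and cl: "\<forall>v\<in>S. (\<Sum>u\<in>S. \<pi>0 (u, v)) = q v" and cost: "(\<Sum>w\<in>S \<times> S. d (fst w) (snd w) * \<pi>0 w) \<le> B"
  proof -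
    have "\<exists>\<pi>. (\<forall>u\<in>S. \<forall>v\<in>S. \<pi> (u, v) \<ge> 0) \<and> (\<forall>u\<in>S. (\<Sum>v\<in>S. \<pi> (u, v)) = p u)
     \<and> (\<forall>v\<in>S. (\<Sum>u\<in>S. \<pi> (u, v)) = q v) \<and> (\<Sum>w\<in>S \<times> S. d (fst w) (snd w) * \<pi> w) \<le> B"
      by (rule KR_dual[OF fin ne d0 dsym dtri p0 p1 q0 q1 bound])
    then show ?thesis using that by blast
  qed
  define \<pi> where "\<pi> = (\<lambda>w. if w \<in> S \<times> S then \<pi>0 w else 0)"
  have cp: "coupling p q \<pi>"
    unfolding coupling_def
  proof (intro conjI allI)
    fix u v show "\<pi> (u, v) \<ge> 0" using nn by (auto simp: \<pi>_def)
  next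
    fix u show "((\<lambda>v. \<pi> (u, v)) has_sum p u) UNIV"
    proof (cases "u \<in> S")
      case True
      show ?thesis
        by (rule hs_of_support[OF fin]) (use True rw in \<open>auto simp: \<pi>_def\<close>)
    next
      case False
      then show ?thesis using pz[OF False] by (simp add: \<pi>_def has_sum_0)
    qed
  next
    fix v show "((\<lambda>u. \<pi> (u, v)) has_sum q v) UNIV"
    proof (cases "v \<in> S")
      case True
      show ?thesis
        by (rule hs_of_support[OF fin]) (use True cl in \<open>auto simp: \<pi>_def\<close>)
    next
      case False
      then show ?thesis using qz[OF False] by (simp add: \<pi>_def has_sum_0)
    qed
  qed
  have "W1 d p q \<le> infsum (\<lambda>(u, v). d u v * \<pi> (u, v)) UNIV"
    unfolding W1_def
  proof (rule cInf_lower)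
    show "infsum (\<lambda>(u, v). d u v * \<pi> (u, v)) UNIV \<in> (\<lambda>\<pi>. infsum (\<lambda>(u, v). d u v * \<pi> (u, v)) UNIV) ` {\<pi>. coupling p q \<pi>}"
      using cp by blast
    show "bdd_below ((\<lambda>\<pi>. infsum (\<lambda>(u, v). d u v * \<pi> (u, v)) UNIV) ` {\<pi>. coupling p q \<pi>})"
    proof (rule bdd_belowI[of _ 0], clarify)
      fix \<pi>' assume "coupling p q \<pi>'"
      then show "0 \<le> infsum (\<lambda>(u, v). d u v * \<pi>' (u, v)) UNIV"
        using weak_dual[OF WA, of \<pi>' "\<lambda>_. 0" d] dnn by simp
    qed
  qed
  also have "\<dots> = (\<Sum>w\<in>S \<times> S. d (fst w) (snd w) * \<pi> w)" by (rule coupling_props(1)[OF WA cp])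
  also have "\<dots> = (\<Sum>w\<in>S \<times> S. d (fst w) (snd w) * \<pi>0 w)" by (rule sum.cong) (auto simp: \<pi>_def)
  finally show ?thesis using cost by simp
qed


lemma at0_nonbot: "at (0::real) within {0..1} \<noteq> bot"
  using at_within_Icc_at_right[of "0::real" 1] trivial_limit_at_right_real[of "0::real"] by simp

lemma deriv_unique0:
  fixes f :: "real \<Rightarrow> real"
  assumes "(f has_real_derivative D1) (at 0 within {0..1})" "(f has_real_derivative D2) (at 0 within {0..1})"
  shows "D1 = D2"
  using vector_derivative_unique_within[OF at0_nonbot] assms
  by (simp add: has_real_derivative_iff_has_vector_derivative)

lemma rate_eq:
  assumes "((\<lambda>\<epsilon>. \<mu> z \<epsilon> w) has_real_derivative D) (at 0 within {0..1})"
  shows "rate \<mu> z w = D"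
  unfolding rate_def using assms deriv_unique0 by (intro the_equality) blast+

lemma deriv_exists:
  assumes ta: "time_analytic V \<mu>" and z: "z \<in> V" and w: "w \<in> V"
  shows "\<exists>D. ((\<lambda>\<epsilon>. \<mu> z \<epsilon> w) has_real_derivative D) (at 0 within {0..1})"
proof -
  obtain \<delta> g where \<delta>: "\<delta> > 0" and an: "real_analytic_on g {-\<delta><..<1+\<delta>}"
    and eq: "\<forall>\<epsilon>\<in>{0..1}. g \<epsilon> = \<mu> z \<epsilon> w"
    using ta z w unfolding time_analytic_def by blast
  have "0 \<in> {-\<delta><..<1+\<delta>}" using \<delta> by simp
  then obtain r a where r: "r > 0" and ser: "\<And>s. \<bar>s - 0\<bar> < r \<Longrightarrow> (\<lambda>n. a n * (s - 0) ^ n) sums g s"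
    using an unfolding real_analytic_on_def by blast
  have sm: "summable (\<lambda>n. a n * (r/2) ^ n)"
    using ser[of "r/2"] r by (auto intro: sums_summable)
  have D1: "((\<lambda>s. \<Sum>n. a n * s ^ n) has_real_derivative (\<Sum>n. diffs a n * 0 ^ n)) (at 0)"
    by (rule termdiffs_strong[OF sm]) (use r in simp)
  have D2: "(g has_real_derivative (\<Sum>n. diffs a n * 0 ^ n)) (at 0)"
  proof (rule has_field_derivative_transform_within_open[OF D1, of "ball 0 r"])
    show "open (ball (0::real) r)" by simp
    show "(0::real) \<in> ball 0 r" using r by simp
    fix s :: real assume "s \<in> ball 0 r"
    then have "\<bar>s - 0\<bar> < r" by (simp add: dist_real_def)
    then show "(\<Sum>n. a n * s ^ n) = g s" using ser[of s] by (simp add: sums_iff)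
  qed
  have D3: "((\<lambda>\<epsilon>. \<mu> z \<epsilon> w) has_real_derivative (\<Sum>n. diffs a n * 0 ^ n)) (at 0 within {0..1})"
    by (rule has_field_derivative_transform_within[OF has_field_derivative_at_within[OF D2], of 1])
       (use eq in auto)
  then show ?thesis by blast
qed

lemma lrw_basic:
  assumes "local_random_walk V d \<mu> K" "z \<in> V"
  shows "\<And>\<epsilon> w. \<epsilon> \<in> {0..1} \<Longrightarrow> \<mu> z \<epsilon> w \<ge> 0"
    and "\<And>\<epsilon> w. \<epsilon> \<in> {0..1} \<Longrightarrow> w \<notin> K z \<Longrightarrow> \<mu> z \<epsilon> w = 0"
    and "\<And>\<epsilon>. \<epsilon> \<in> {0..1} \<Longrightarrow> (\<mu> z \<epsilon> has_sum 1) UNIV"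
    and "\<And>w. \<mu> z 0 w = (if w = z then 1 else 0)"
    and "finite (K z)" "K z \<subseteq> V" "z \<in> K z"
    and "\<And>w. continuous_on {0..1} (\<lambda>\<epsilon>. \<mu> z \<epsilon> w)"
proof -
  note D = assms(1)[unfolded local_random_walk_def]
  show "\<mu> z \<epsilon> w \<ge> 0" if "\<epsilon> \<in> {0..1}" for \<epsilon> w using D assms(2) that by blast
  show "\<mu> z \<epsilon> w = 0" if "\<epsilon> \<in> {0..1}" "w \<notin> K z" for \<epsilon> w using D assms(2) that by blast
  show "(\<mu> z \<epsilon> has_sum 1) UNIV" if "\<epsilon> \<in> {0..1}" for \<epsilon> using D assms(2) that by blast
  show "\<mu> z 0 w = (if w = z then 1 else 0)" for w using D assms(2) by blast
  show "finite (K z)" "K z \<subseteq> V" using D assms(2) by blast+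
  show "continuous_on {0..1} (\<lambda>\<epsilon>. \<mu> z \<epsilon> w)" for w using D assms(2) by blast
  have "\<mu> z 0 z \<noteq> 0" using D assms(2) by simp
  moreover have "\<forall>\<epsilon>\<in>{0..1}. {w. \<mu> z \<epsilon> w \<noteq> 0} \<subseteq> K z" using D assms(2) by blast
  then have "{w. \<mu> z 0 w \<noteq> 0} \<subseteq> K z" by simp
  ultimately show "z \<in> K z" by blast
qed

lemma lrw_sum:
  assumes "local_random_walk V d \<mu> K" "z \<in> V" "\<epsilon> \<in> {0..1}" "finite S" "K z \<subseteq> S"
  shows "sum (\<mu> z \<epsilon>) S = 1"
  using hs_support[OF lrw_basic(3)[OF assms(1,2,3)] assms(4)] lrw_basic(2)[OF assms(1,2,3)] assms(5)
  by blast

lemma rate_deriv: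
  assumes "time_analytic V \<mu>" "z \<in> V" "w \<in> V"
  shows "((\<lambda>\<epsilon>. \<mu> z \<epsilon> w) has_real_derivative rate \<mu> z w) (at 0 within {0..1})"
  using deriv_exists[OF assms] rate_eq by metis

lemma rate_out:
  assumes "local_random_walk V d \<mu> K" "z \<in> V" "w \<notin> K z"
  shows "rate \<mu> z w = 0"
proof (rule rate_eq)
  show "((\<lambda>\<epsilon>. \<mu> z \<epsilon> w) has_real_derivative 0) (at 0 within {0..1})"
    by (rule has_field_derivative_transform_within[OF DERIV_const[of 0 "at 0 within {0..1}"], of 1])
       (use lrw_basic(2)[OF assms(1,2) _ assms(3)] in auto)
qed

lemma rate_sum:
  assumes lrw: "local_random_walk V d \<mu> K" and ta: "time_analytic V \<mu>" and z: "z \<in> V"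
    and S: "finite S" "K z \<subseteq> S" "S \<subseteq> V"
  shows "(\<Sum>w\<in>S. rate \<mu> z w) = 0"
proof -
  have a: "((\<lambda>\<epsilon>. \<Sum>w\<in>S. \<mu> z \<epsilon> w) has_real_derivative (\<Sum>w\<in>S. rate \<mu> z w)) (at 0 within {0..1})"
    by (rule DERIV_sum) (use rate_deriv[OF ta z] S in blast)
  have b: "((\<lambda>\<epsilon>. \<Sum>w\<in>S. \<mu> z \<epsilon> w) has_real_derivative 0) (at 0 within {0..1})"
    by (rule has_field_derivative_transform_within[OF DERIV_const[of 1 "at 0 within {0..1}"], of 1])
       (use lrw_sum[OF lrw z _ S(1,2)] in auto)
  show ?thesis using deriv_unique0[OF a b] .
qed

lemma gen_eq:
  assumes lrw: "local_random_walk V d \<mu> K" and ta: "time_analytic V \<mu>" and z: "z \<in> V"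
    and S: "finite S" "K z \<subseteq> S" "S \<subseteq> V"
  shows "(\<Sum>w\<in>S. g w * rate \<mu> z w) = gen \<mu> K g z"
proof -
  have "(\<Sum>w\<in>S. g w * rate \<mu> z w) = (\<Sum>w\<in>S. (g w - g z) * rate \<mu> z w) + g z * (\<Sum>w\<in>S. rate \<mu> z w)"
    by (simp add: left_diff_distrib sum_subtractf sum_distrib_left)
  also have "(\<Sum>w\<in>S. rate \<mu> z w) = 0" by (rule rate_sum[OF lrw ta z S])
  also have "(\<Sum>w\<in>S. (g w - g z) * rate \<mu> z w) = (\<Sum>w\<in>K z - {z}. (g w - g z) * rate \<mu> z w)"
  proof (rule sum.mono_neutral_right[OF S(1)])
    show "K z - {z} \<subseteq> S" using S by auto
    show "\<forall>w\<in>S - (K z - {z}). (g w - g z) * rate \<mu> z w = 0"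
      using rate_out[OF lrw z] by auto
  qed
  finally show ?thesis by (simp add: gen_def)
qed


lemma max_lip: "\<bar>max a b - max c e\<bar> \<le> max \<bar>a - c\<bar> \<bar>b - (e::real)\<bar>"
  by (auto simp: max_def abs_if)

lemma sum_delta_mult:
  assumes "finite S" "x \<in> S"
  shows "(\<Sum>w\<in>S. g w * (if w = x then 1 else 0)) = (g x :: real)"
proof -
  have "(\<Sum>w\<in>S. g w * (if w = x then 1 else 0)) = (\<Sum>w\<in>S. if w = x then g x else 0)"
    by (rule sum.cong) auto
  then show ?thesis using assms by simp
qed

lemma kbound:
  fixes k p q :: "'a \<Rightarrow> real"
  assumes "finite S" "x \<in> S" "y \<in> S" "x \<noteq> y"
    and "\<And>z. z \<in> S \<Longrightarrow> 0 \<le> k z \<and> k z \<le> \<tau>" "k x = 0" "k y = \<tau>"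
    and "\<And>z. z \<in> S \<Longrightarrow> p z \<ge> 0" "\<And>z. z \<in> S \<Longrightarrow> q z \<ge> 0" "sum p S = 1" "p x + q y \<ge> 1"
  shows "(\<Sum>z\<in>S. k z * (p z - q z)) \<le> 0"
proof -
  have t0: "\<tau> \<ge> 0" using assms(5)[OF assms(2)] by simp
  have "(\<Sum>z\<in>S. k z * p z) = k x * p x + (\<Sum>z\<in>S - {x}. k z * p z)"
    using assms(1,2) by (rule sum.remove)
  also have "\<dots> = (\<Sum>z\<in>S - {x}. k z * p z)" using assms(6) by simp
  also have "\<dots> \<le> (\<Sum>z\<in>S - {x}. \<tau> * p z)"
    using assms(5,8) by (intro sum_mono mult_right_mono) auto
  also have "\<dots> = \<tau> * (sum p S - p x)"
    using assms(1,2) by (simp add: sum_distrib_left[symmetric] sum_diff1)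
  finally have A: "(\<Sum>z\<in>S. k z * p z) \<le> \<tau> * (1 - p x)" using assms(10) by simp
  have "k y * q y \<le> (\<Sum>z\<in>S. k z * q z)"
    using assms(1,3,5,9) by (intro member_le_sum) auto
  then have B: "\<tau> * q y \<le> (\<Sum>z\<in>S. k z * q z)" using assms(7) by simp
  have "(\<Sum>z\<in>S. k z * (p z - q z)) = (\<Sum>z\<in>S. k z * p z) - (\<Sum>z\<in>S. k z * q z)"
    by (simp add: right_diff_distrib sum_subtractf)
  also have "\<dots> \<le> \<tau> * (1 - p x - q y)" using A B by (simp add: algebra_simps)
  also have "\<dots> \<le> 0" using t0 assms(11) by (simp add: mult_nonneg_nonpos)
  finally show ?thesis .
qed

theorem mainTheorem12:
  fixes V :: "'v set" and E :: "'v \<Rightarrow> 'v \<Rightarrow> bool" and d :: "'v \<Rightarrow> 'v \<Rightarrow> real"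
    and \<mu> :: "'v \<Rightarrow> real \<Rightarrow> 'v \<Rightarrow> real" and K :: "'v \<Rightarrow> 'v set" and x y :: 'v
  assumes "locally_finite_graph V E"
    and "metric_on V d" and "complete_metric_on V d"
    and "local_random_walk V d \<mu> K"
    and "time_analytic V \<mu>"
    and "x \<in> V" and "y \<in> V" and "x \<noteq> y"
  shows "((\<lambda>\<epsilon>. ollivier_ric_eps d \<mu> \<epsilon> x y / \<epsilon>) \<longlongrightarrow>
           Inf {grad d y x (gen \<mu> K f) | f.
                  (\<forall>u\<in>K x \<union> K y. \<forall>v\<in>K x \<union> K y. \<bar>f u - f v\<bar> \<le> d u v) \<and>
                  grad d x y f = 1}) (at_right 0)"
proof -
  note lrw = assms(4) and ta = assms(5) and xV = assms(6) and yV = assms(7) and xy = assms(8)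
  note bX = lrw_basic[OF lrw xV] and bY = lrw_basic[OF lrw yV]
  define S where "S = K x \<union> K y"
  have finS: "finite S" using bX(5) bY(5) by (simp add: S_def)
  have SV: "S \<subseteq> V" using bX(6) bY(6) by (simp add: S_def)
  have xS: "x \<in> S" and yS: "y \<in> S" using bX(7) bY(7) by (auto simp: S_def)
  have KxS: "K x \<subseteq> S" and KyS: "K y \<subseteq> S" by (auto simp: S_def)
  have Sne: "S \<noteq> {}" using xS by auto
  have met: "\<And>u v. u \<in> V \<Longrightarrow> v \<in> V \<Longrightarrow> d u v \<ge> 0 \<and> (d u v = 0 \<longleftrightarrow> u = v) \<and> d u v = d v u"
    and tri: "\<And>u v w. u \<in> V \<Longrightarrow> v \<in> V \<Longrightarrow> w \<in> V \<Longrightarrow> d u w \<le> d u v + d v w"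
    using assms(2) unfolding metric_on_def by blast+
  have d0: "\<And>u. u \<in> S \<Longrightarrow> d u u = 0" using met SV by blast
  have dsym: "\<And>u v. u \<in> S \<Longrightarrow> v \<in> S \<Longrightarrow> d u v = d v u" using met SV by blast
  have dnn: "\<And>u v. u \<in> S \<Longrightarrow> v \<in> S \<Longrightarrow> d u v \<ge> 0" using met SV by blast
  have dtri: "\<And>u v w. u \<in> S \<Longrightarrow> v \<in> S \<Longrightarrow> w \<in> S \<Longrightarrow> d u w \<le> d u v + d v w" using tri SV by blast
  define dd where "dd = d x y"
  have ddpos: "dd > 0" using met[OF xV yV] xy by (auto simp: dd_def)
  have dyx: "d y x = dd" using dsym[OF xS yS] by (simp add: dd_def)
  define Lip where "Lip = (\<lambda>f. \<forall>u\<in>S. \<forall>v\<in>S. \<bar>f u - f v\<bar> \<le> d u v)"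
  have WAe: "WA S (\<mu> x \<epsilon>) (\<mu> y \<epsilon>)" if "\<epsilon> \<in> {0..1}" for \<epsilon>
    unfolding WA_def using finS bX(1)[OF that] bY(1)[OF that] bX(2)[OF that] bY(2)[OF that]
      lrw_sum[OF lrw xV that finS KxS] lrw_sum[OF lrw yV that finS KyS] by (auto simp: S_def)
  have genx: "(\<Sum>w\<in>S. g w * rate \<mu> x w) = gen \<mu> K g x" for g
    by (rule gen_eq[OF lrw ta xV finS KxS SV])
  have geny: "(\<Sum>w\<in>S. g w * rate \<mu> y w) = gen \<mu> K g y" for g
    by (rule gen_eq[OF lrw ta yV finS KyS SV])
  define err where "err = (\<lambda>\<epsilon> w. (\<mu> x \<epsilon> w - \<mu> x 0 w - \<epsilon> * rate \<mu> x w) - (\<mu> y \<epsilon> w - \<mu> y 0 w - \<epsilon> * rate \<mu> y w))"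
  have err_sum: "(\<Sum>w\<in>S. err \<epsilon> w) = 0" if "\<epsilon> \<in> {0..1}" for \<epsilon>
  proof -
    have "(\<Sum>w\<in>S. err \<epsilon> w) = (sum (\<mu> x \<epsilon>) S - sum (\<mu> x 0) S - \<epsilon> * (\<Sum>w\<in>S. rate \<mu> x w))
        - (sum (\<mu> y \<epsilon>) S - sum (\<mu> y 0) S - \<epsilon> * (\<Sum>w\<in>S. rate \<mu> y w))"
      by (simp add: err_def sum_subtractf sum_distrib_left)
    also have "\<dots> = 0"
      using lrw_sum[OF lrw xV that finS KxS] lrw_sum[OF lrw yV that finS KyS]
        lrw_sum[OF lrw xV _ finS KxS, of 0] lrw_sum[OF lrw yV _ finS KyS, of 0]
        rate_sum[OF lrw ta xV finS KxS SV] rate_sum[OF lrw ta yV finS KyS SV] by simp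
    finally show ?thesis .
  qed
  have expand: "(\<Sum>w\<in>S. g w * (\<mu> x \<epsilon> w - \<mu> y \<epsilon> w)) = g x - g y + \<epsilon> * (gen \<mu> K g x - gen \<mu> K g y)
      + (\<Sum>w\<in>S. (g w - g x) * err \<epsilon> w)" if "\<epsilon> \<in> {0..1}" for \<epsilon> g
  proof -
    have pw: "g w * (\<mu> x \<epsilon> w - \<mu> y \<epsilon> w) = g w * \<mu> x 0 w - g w * \<mu> y 0 w
        + \<epsilon> * (g w * rate \<mu> x w) - \<epsilon> * (g w * rate \<mu> y w) + ((g w - g x) * err \<epsilon> w + g x * err \<epsilon> w)" for w
      by (simp add: err_def algebra_simps)
    have "(\<Sum>w\<in>S. g w * (\<mu> x \<epsilon> w - \<mu> y \<epsilon> w)) = (\<Sum>w\<in>S. g w * \<mu> x 0 w) - (\<Sum>w\<in>S. g w * \<mu> y 0 w)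
        + \<epsilon> * (\<Sum>w\<in>S. g w * rate \<mu> x w) - \<epsilon> * (\<Sum>w\<in>S. g w * rate \<mu> y w)
        + ((\<Sum>w\<in>S. (g w - g x) * err \<epsilon> w) + g x * (\<Sum>w\<in>S. err \<epsilon> w))"
      unfolding pw by (simp only: sum.distrib sum_subtractf sum_distrib_left)
    also have "(\<Sum>w\<in>S. g w * \<mu> x 0 w) = g x" unfolding bX(4) by (rule sum_delta_mult[OF finS xS])
    also have "(\<Sum>w\<in>S. g w * \<mu> y 0 w) = g y" unfolding bY(4) by (rule sum_delta_mult[OF finS yS])
    finally show ?thesis using err_sum[OF that] genx geny by (simp add: algebra_simps)
  qed
  define Q where "Q = (\<lambda>\<epsilon>. \<Sum>w\<in>S. d x w * \<bar>((\<mu> x \<epsilon> w - \<mu> x 0 w) / \<epsilon> - rate \<mu> x w) - ((\<mu> y \<epsilon> w - \<mu> y 0 w) / \<epsilon> - rate \<mu> y w)\<bar>)"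
  have errQ: "\<bar>\<Sum>w\<in>S. (g w - g x) * err \<epsilon> w\<bar> \<le> \<epsilon> * Q \<epsilon>" if "\<epsilon> > 0" "Lip g" for \<epsilon> g
  proof -
    have "\<bar>\<Sum>w\<in>S. (g w - g x) * err \<epsilon> w\<bar> \<le> (\<Sum>w\<in>S. \<bar>(g w - g x) * err \<epsilon> w\<bar>)" by (rule sum_abs)
    also have "\<dots> \<le> (\<Sum>w\<in>S. d x w * \<bar>err \<epsilon> w\<bar>)"
    proof (rule sum_mono)
      fix w assume w: "w \<in> S"
      have "\<bar>g w - g x\<bar> \<le> d x w" using that(2) w xS dsym[OF xS w] unfolding Lip_def by metis
      then show "\<bar>(g w - g x) * err \<epsilon> w\<bar> \<le> d x w * \<bar>err \<epsilon> w\<bar>"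
        by (simp add: abs_mult mult_right_mono)
    qed
    also have "\<dots> = \<epsilon> * Q \<epsilon>"
    proof -
      have "err \<epsilon> w = \<epsilon> * (((\<mu> x \<epsilon> w - \<mu> x 0 w) / \<epsilon> - rate \<mu> x w) - ((\<mu> y \<epsilon> w - \<mu> y 0 w) / \<epsilon> - rate \<mu> y w))" for w
        using that(1) by (simp add: err_def field_simps)
      then show ?thesis using that(1) by (simp add: Q_def abs_mult sum_distrib_left mult.left_commute)
    qed
    finally show ?thesis .
  qed
  have Qlim: "(Q \<longlongrightarrow> 0) (at_right 0)"
  proof -
    have dq: "((\<lambda>\<epsilon>. (\<mu> z \<epsilon> w - \<mu> z 0 w) / \<epsilon>) \<longlongrightarrow> rate \<mu> z w) (at_right 0)" if "z \<in> V" "w \<in> V" for z w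
      using rate_deriv[OF ta that] unfolding has_field_derivative_iff at_within_Icc_at_right[of "0::real" 1, OF zero_less_one]
      by simp
    have "(Q \<longlongrightarrow> (\<Sum>w\<in>S. d x w * \<bar>(rate \<mu> x w - rate \<mu> x w) - (rate \<mu> y w - rate \<mu> y w)\<bar>)) (at_right 0)"
      unfolding Q_def using SV xV yV by (intro tendsto_intros dq) auto
    then show ?thesis by simp
  qed
  have cont: "((\<lambda>\<epsilon>. \<mu> x \<epsilon> x + \<mu> y \<epsilon> y) \<longlongrightarrow> 2) (at_right 0)"
  proof -
    have c: "((\<lambda>\<epsilon>. \<mu> z \<epsilon> w) \<longlongrightarrow> \<mu> z 0 w) (at_right 0)" if "z \<in> V" for z w
      using lrw_basic(8)[OF lrw that, of w] unfolding continuous_on_def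
      by (metis at_within_Icc_at_right atLeastAtMost_iff order_refl zero_le_one zero_less_one)
    have "((\<lambda>\<epsilon>. \<mu> x \<epsilon> x + \<mu> y \<epsilon> y) \<longlongrightarrow> \<mu> x 0 x + \<mu> y 0 y) (at_right 0)"
      by (intro tendsto_intros c xV yV)
    then show ?thesis using bX(4) bY(4) by simp
  qed
  define T where "T = {grad d y x (gen \<mu> K f) | f. Lip f \<and> grad d x y f = 1}"
  have gradxy: "grad d x y f = 1 \<longleftrightarrow> f y - f x = dd" for f
    using ddpos by (auto simp: grad_def dd_def field_simps)
  have gradyx: "grad d y x G = (G x - G y) / dd" for G by (simp add: grad_def dyx)
  have Tne: "T \<noteq> {}"
  proof -
    have "Lip (d x)" unfolding Lip_def
    proof (intro ballI)
      fix u v assume "u \<in> S" "v \<in> S"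
      then show "\<bar>d x u - d x v\<bar> \<le> d u v" using dtri[OF xS \<open>u\<in>S\<close> \<open>v\<in>S\<close>] dtri[OF xS \<open>v\<in>S\<close> \<open>u\<in>S\<close>] dsym[OF \<open>u\<in>S\<close> \<open>v\<in>S\<close>] by linarith
    qed
    moreover have "grad d x y (d x) = 1" using gradxy d0[OF xS] by (simp add: dd_def)
    ultimately show ?thesis unfolding T_def by blast
  qed
  define Mz where "Mz = (\<lambda>z. \<Sum>w\<in>K z - {z}. d w z * \<bar>rate \<mu> z w\<bar>)"
  have genb: "\<bar>gen \<mu> K f z\<bar> \<le> Mz z" if "Lip f" "z \<in> S" "K z \<subseteq> S" for f z
  proof -
    have "\<bar>gen \<mu> K f z\<bar> \<le> (\<Sum>w\<in>K z - {z}. \<bar>(f w - f z) * rate \<mu> z w\<bar>)" unfolding gen_def by (rule sum_abs)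
    also have "\<dots> \<le> Mz z" unfolding Mz_def
    proof (rule sum_mono)
      fix w assume "w \<in> K z - {z}"
      then have "w \<in> S" using that by auto
      then have "\<bar>f w - f z\<bar> \<le> d w z" using that unfolding Lip_def by blast
      then show "\<bar>(f w - f z) * rate \<mu> z w\<bar> \<le> d w z * \<bar>rate \<mu> z w\<bar>" by (simp add: abs_mult mult_right_mono)
    qed
    finally show ?thesis .
  qed
  have Tbdd: "bdd_below T"
  proof (rule bdd_belowI[of _ "- (Mz x + Mz y) / dd"])
    fix t assume "t \<in> T"
    then obtain f where f: "Lip f" "t = grad d y x (gen \<mu> K f)" unfolding T_def by blast
    have "- (Mz x + Mz y) \<le> gen \<mu> K f x - gen \<mu> K f y"
      using genb[OF f(1) xS KxS] genb[OF f(1) yS KyS] by linarith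
    then show "- (Mz x + Mz y) / dd \<le> t" using ddpos f(2) gradyx by (simp add: divide_right_mono)
  qed
  define I where "I = Inf T"
  define R where "R = (\<lambda>\<epsilon>. ollivier_ric_eps d \<mu> \<epsilon> x y / \<epsilon>)"
  have upper: "R \<epsilon> \<le> (gen \<mu> K f x - gen \<mu> K f y) / dd + Q \<epsilon> / dd"
    if e: "\<epsilon> > 0" "\<epsilon> \<le> 1" and f: "Lip f" "f y - f x = dd" for \<epsilon> f
  proof -
    have e01: "\<epsilon> \<in> {0..1}" using e by simp
    have lipm: "\<forall>u\<in>S. \<forall>v\<in>S. \<bar>(\<lambda>z. - f z) u - (\<lambda>z. - f z) v\<bar> \<le> d u v"
      using f(1) unfolding Lip_def by (simp add: abs_minus_commute)
    have W: "(\<Sum>u\<in>S. (- f u) * (\<mu> x \<epsilon> u - \<mu> y \<epsilon> u)) \<le> W1 d (\<mu> x \<epsilon>) (\<mu> y \<epsilon>)"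
      using W1_ge[OF WAe[OF e01] lipm] by simp
    have "(\<Sum>u\<in>S. (- f u) * (\<mu> x \<epsilon> u - \<mu> y \<epsilon> u)) = - (\<Sum>u\<in>S. f u * (\<mu> x \<epsilon> u - \<mu> y \<epsilon> u))"
      by (simp add: sum_negf)
    also have "\<dots> = - (f x - f y + \<epsilon> * (gen \<mu> K f x - gen \<mu> K f y) + (\<Sum>w\<in>S. (f w - f x) * err \<epsilon> w))"
      using expand[OF e01] by simp
    finally have W2: "dd - \<epsilon> * (gen \<mu> K f x - gen \<mu> K f y) - \<epsilon> * Q \<epsilon> \<le> W1 d (\<mu> x \<epsilon>) (\<mu> y \<epsilon>)"
      using W errQ[OF e(1) f(1)] f(2) by (simp add: abs_le_iff)
    have "ollivier_ric_eps d \<mu> \<epsilon> x y = 1 - W1 d (\<mu> x \<epsilon>) (\<mu> y \<epsilon>) / dd"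
      by (simp add: ollivier_ric_eps_def dd_def)
    also have "\<dots> \<le> 1 - (dd - \<epsilon> * (gen \<mu> K f x - gen \<mu> K f y) - \<epsilon> * Q \<epsilon>) / dd"
      using W2 ddpos by (simp add: divide_right_mono)
    also have "\<dots> = \<epsilon> * ((gen \<mu> K f x - gen \<mu> K f y) / dd + Q \<epsilon> / dd)"
      using ddpos by (simp add: field_simps)
    finally show ?thesis using e(1) by (simp add: R_def pos_divide_le_eq mult.commute)
  qed
  have lower: "I - Q \<epsilon> / dd \<le> R \<epsilon>"
    if e: "\<epsilon> > 0" "\<epsilon> \<le> 1" and c1: "\<mu> x \<epsilon> x + \<mu> y \<epsilon> y \<ge> 1" for \<epsilon>
  proof -
    have e01: "\<epsilon> \<in> {0..1}" using e by simp
    have B: "(\<Sum>u\<in>S. h u * (\<mu> x \<epsilon> u - \<mu> y \<epsilon> u)) \<le> dd - \<epsilon> * dd * I + \<epsilon> * Q \<epsilon>"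
      if h: "\<forall>u\<in>S. \<forall>v\<in>S. \<bar>h u - h v\<bar> \<le> d u v" for h
    proof -
      define \<tau> where "\<tau> = dd - (h x - h y)"
      have t0: "\<tau> \<ge> 0" using h xS yS by (force simp: \<tau>_def dd_def abs_le_iff)
      define g where "g = (\<lambda>z. max (h z - \<tau>) (h x - d x z))"
      have gx: "g x = h x" using t0 d0[OF xS] by (simp add: g_def)
      have gy: "g y = h x - dd" by (simp add: g_def \<tau>_def dd_def)
      have glip: "Lip g" unfolding Lip_def
      proof (intro ballI)
        fix u v assume u: "u \<in> S" and v: "v \<in> S"
        have "\<bar>g u - g v\<bar> \<le> max \<bar>(h u - \<tau>) - (h v - \<tau>)\<bar> \<bar>(h x - d x u) - (h x - d x v)\<bar>"
          unfolding g_def by (rule max_lip)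
        moreover have "\<bar>(h u - \<tau>) - (h v - \<tau>)\<bar> \<le> d u v" using h u v by simp
        moreover have "\<bar>(h x - d x u) - (h x - d x v)\<bar> \<le> d u v"
          using dtri[OF xS u v] dtri[OF xS v u] dsym[OF u v] by (simp add: abs_le_iff)
        ultimately show "\<bar>g u - g v\<bar> \<le> d u v" by simp
      qed
      define f where "f = (\<lambda>z. - g z)"
      have flip: "Lip f" using glip unfolding Lip_def f_def by (simp add: abs_minus_commute)
      have fgrad: "grad d x y f = 1" using gradxy gx gy by (simp add: f_def)
      have genf: "gen \<mu> K f z = - gen \<mu> K g z" for z
      proof -
        have "\<And>w. (f w - f z) * rate \<mu> z w = - ((g w - g z) * rate \<mu> z w)" by (simp add: f_def algebra_simps)
        then show ?thesis unfolding gen_def by (simp only: sum_negf)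
      qed
      have "I \<le> grad d y x (gen \<mu> K f)"
        unfolding I_def using flip fgrad by (intro cInf_lower Tbdd) (auto simp: T_def)
      then have IG: "dd * I \<le> gen \<mu> K g y - gen \<mu> K g x"
        using ddpos by (simp add: gradyx genf pos_le_divide_eq mult.commute)
      have sg: "(\<Sum>u\<in>S. g u * (\<mu> x \<epsilon> u - \<mu> y \<epsilon> u)) \<le> dd - \<epsilon> * dd * I + \<epsilon> * Q \<epsilon>"
      proof -
        have "(\<Sum>u\<in>S. g u * (\<mu> x \<epsilon> u - \<mu> y \<epsilon> u)) = dd + \<epsilon> * (gen \<mu> K g x - gen \<mu> K g y) + (\<Sum>w\<in>S. (g w - g x) * err \<epsilon> w)"
          using expand[OF e01, of g] gx gy by simp
        moreover have "(\<Sum>w\<in>S. (g w - g x) * err \<epsilon> w) \<le> \<epsilon> * Q \<epsilon>" using errQ[OF e(1) glip] by (simp add: abs_le_iff)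
        moreover have "\<epsilon> * (dd * I) \<le> \<epsilon> * (gen \<mu> K g y - gen \<mu> K g x)" using IG e(1) by (simp add: mult_left_mono)
        ultimately show ?thesis by (simp add: algebra_simps)
      qed
      have sk: "(\<Sum>u\<in>S. (h u - g u) * (\<mu> x \<epsilon> u - \<mu> y \<epsilon> u)) \<le> 0"
      proof (rule kbound[OF finS xS yS xy, of _ \<tau>])
        fix z assume z: "z \<in> S"
        have "h x - d x z \<le> h z" using h xS z by (force simp: abs_le_iff)
        then show "0 \<le> h z - g z \<and> h z - g z \<le> \<tau>" using t0 by (auto simp: g_def)
      next
        show "h x - g x = 0" using gx by simp
        show "h y - g y = \<tau>" using gy by (simp add: \<tau>_def)
        show "\<And>z. z \<in> S \<Longrightarrow> \<mu> x \<epsilon> z \<ge> 0" "\<And>z. z \<in> S \<Longrightarrow> \<mu> y \<epsilon> z \<ge> 0" using bX(1)[OF e01] bY(1)[OF e01] by auto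
        show "sum (\<mu> x \<epsilon>) S = 1" by (rule lrw_sum[OF lrw xV e01 finS KxS])
        show "\<mu> x \<epsilon> x + \<mu> y \<epsilon> y \<ge> 1" by (rule c1)
      qed
      have "(\<Sum>u\<in>S. h u * (\<mu> x \<epsilon> u - \<mu> y \<epsilon> u)) = (\<Sum>u\<in>S. g u * (\<mu> x \<epsilon> u - \<mu> y \<epsilon> u)) + (\<Sum>u\<in>S. (h u - g u) * (\<mu> x \<epsilon> u - \<mu> y \<epsilon> u))"
        by (simp add: sum.distrib[symmetric] algebra_simps)
      then show ?thesis using sg sk by simp
    qed
    have W: "W1 d (\<mu> x \<epsilon>) (\<mu> y \<epsilon>) \<le> dd - \<epsilon> * dd * I + \<epsilon> * Q \<epsilon>"
      by (rule W1_le[OF WAe[OF e01] Sne d0 dsym dtri dnn B]) auto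
    have "\<epsilon> * (I - Q \<epsilon> / dd) = 1 - (dd - \<epsilon> * dd * I + \<epsilon> * Q \<epsilon>) / dd"
      using ddpos by (simp add: field_simps)
    also have "\<dots> \<le> 1 - W1 d (\<mu> x \<epsilon>) (\<mu> y \<epsilon>) / dd"
      using W ddpos by (simp add: divide_right_mono)
    also have "\<dots> = ollivier_ric_eps d \<mu> \<epsilon> x y" by (simp add: ollivier_ric_eps_def dd_def)
    finally show ?thesis using e(1) by (simp add: R_def pos_le_divide_eq mult.commute)
  qed
  have lim: "(R \<longlongrightarrow> I) (at_right 0)"
  proof (rule tendstoI)
    fix \<eta> :: real assume \<eta>: "\<eta> > 0"
    obtain t where tT: "t \<in> T" and tI: "t < I + \<eta> / 2"
      using cInf_lessD[OF Tne, of "I + \<eta> / 2"] \<eta> by (auto simp: I_def)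
    obtain f where f: "Lip f" "grad d x y f = 1" and tf: "t = grad d y x (gen \<mu> K f)"
      using tT unfolding T_def by blast
    have fdd: "f y - f x = dd" using f(2) gradxy by simp
    have ev1: "eventually (\<lambda>\<epsilon>. \<epsilon> > 0 \<and> \<epsilon> \<le> 1) (at_right (0::real))"
      using eventually_at_right_real[of 0 "1::real"] by (rule eventually_mono) auto
    have ev2: "eventually (\<lambda>\<epsilon>. \<mu> x \<epsilon> x + \<mu> y \<epsilon> y > 1) (at_right 0)"
      using order_tendstoD(1)[OF cont, of 1] by simp
    have ev3: "eventually (\<lambda>\<epsilon>. Q \<epsilon> < dd * (\<eta> / 2)) (at_right 0)"
      using order_tendstoD(2)[OF Qlim, of "dd * (\<eta> / 2)"] ddpos \<eta> by simp
    show "eventually (\<lambda>\<epsilon>. dist (R \<epsilon>) I < \<eta>) (at_right 0)"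
      using ev1 ev2 ev3
    proof eventually_elim
      case (elim \<epsilon>)
      have q: "Q \<epsilon> / dd < \<eta> / 2" using elim ddpos by (simp add: pos_divide_less_eq mult.commute)
      have "R \<epsilon> \<le> t + Q \<epsilon> / dd" using upper[OF _ _ f(1) fdd, of \<epsilon>] elim tf gradyx by simp
      moreover have "I - Q \<epsilon> / dd \<le> R \<epsilon>" using lower[of \<epsilon>] elim by simp
      ultimately show ?case unfolding dist_real_def abs_less_iff using q tI by linarith
    qed
  qed
  have TT: "T = {grad d y x (gen \<mu> K f) | f. (\<forall>u\<in>K x \<union> K y. \<forall>v\<in>K x \<union> K y. \<bar>f u - f v\<bar> \<le> d u v) \<and> grad d x y f = 1}"
    unfolding T_def Lip_def S_def ..
  show ?thesis using lim unfolding R_def I_def TT .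
qed

end
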